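(* Fix integers $P>1$ and $N\ge 1$, and set $L=N+P-1$. For $\mathbf{b}=[b_1,\dots,b_N]^T\in\{\pm1\}^N$ let $\mathbf{B}$ be the $L\times P$ matrix whose $j$th column ($1\le j\le P$) is $[\underbrace{0,\dots,0}_{j-1},b_1,\dots,b_N,\underbrace{0,\dots,0}_{P-j}]^T$. For $\mathbf{c}=(c_1,\dots,c_{P-1})\in\{\pm1\}^{P-1}$ let $\mathbf{G}(\mathbf{c})$ be the symmetric $P\times P$ Toeplitz matrix with all diagonal entries equal to $N$ and $(i,j)$ entry $c_{|i-j|}$ for $i\ne j$. For a prefix $\mathbf{b}_{(\ell)}=[b_1,\dots,b_\ell]\in\{\pm1\}^\ell$ ($1\le\ell\le N$), let $\mathcal{A}(\mathbf{b}_{(\ell)}\mid\mathbf{G}(\mathbf{c}))$ be the set of all $\mathbf{b}'\in\{\pm1\}^N$ whose first $\ell$ entries equal $b_1,\dots,b_\ell$ and whose associated matrix $\mathbf{B}'$ satisfies $\mathbf{B}'^T\mathbf{B}'=\mathbf{G}(\mathbf{c})$. For an integer $k\ge 0$, an integer vector $\mathbf{q}=(q_1,\dots,q_{P-1})\in\mathbb{Z}^{P-1}$ and $d_{2-P},\dots,d_0\in\{-1,0,1\}$, let $A_k(\mathbf{q}\mid d_{2-P},\dots,d_0)$ be the number of $(d_1,\dots,d_k)\in\{\pm1\}^k$ such that $q_j=\sum_{i=1}^k d_{i-j}d_i$ for all $1\le j\le P-1$ (for $k=0$ this equals $1$ if $\mathbf{q}=\mathbf{0}$ and $0$ otherwise).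 Let $\mathbf{m}_\ell=(m_\ell^{(1)},\dots,m_\ell^{(P-1)})$ with $m_\ell^{(j)}=(b_1b_{j+1}+b_2b_{j+2}+\cdots+b_{\ell-j}b_\ell)\cdot\mathbf{1}\{\ell>j\}$, and use the convention $b_i=0$ for $i\le 0$. Then for $\ell=1,2,\dots,N$, $$|\mathcal{A}(\mathbf{b}_{(\ell)}\mid\mathbf{G}(\mathbf{c}))|=A_{N-\ell}\big(\mathbf{c}-\mathbf{m}_\ell\,\big|\,b_{\ell-P+2},\dots,b_\ell\big).$$
   Context: $\mathbf{1}\{\cdot\}$ denotes the indicator function. $\mathbf{B}$ is the convolution matrix of the codeword for a channel of memory order $P-1$; the diagonal entries of $\mathbf{B}^T\mathbf{B}$ all equal $N$ and its $(i,j)$ entry is the aperiodic autocorrelation $\sum_t b_tb_{t+|i-j|}$. *)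

theory Defs
  imports Main
begin

text \<open>Sequences b_1..b_N are modelled as functions int => int that take values
  in {-1,1} on {1..N} and are 0 elsewhere (so b_i = 0 for i <= 0).\<close>

definition pm1_seqs :: "nat \<Rightarrow> (int \<Rightarrow> int) set" where
  "pm1_seqs N = {b. (\<forall>i\<in>{1..int N}. b i \<in> {-1, 1}) \<and> (\<forall>i. i \<notin> {1..int N} \<longrightarrow> b i = 0)}"

definition convmat :: "nat \<Rightarrow> (int \<Rightarrow> int) \<Rightarrow> nat \<Rightarrow> nat \<Rightarrow> int" where
  "convmat N b t j = (let s = int t - int j + 1 in if 1 \<le> s \<and> s \<le> int N then b s else 0)"

definition gram :: "nat \<Rightarrow> nat \<Rightarrow> (int \<Rightarrow> int) \<Rightarrow> nat \<Rightarrow> nat \<Rightarrow> int" where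
  "gram N P b i j = (\<Sum>t = 1..N + P - 1. convmat N b t i * convmat N b t j)"

definition Gmat :: "nat \<Rightarrow> (nat \<Rightarrow> int) \<Rightarrow> nat \<Rightarrow> nat \<Rightarrow> int" where
  "Gmat N c i j = (if i = j then int N else c (if i \<le> j then j - i else i - j))"

definition Aset :: "nat \<Rightarrow> nat \<Rightarrow> (int \<Rightarrow> int) \<Rightarrow> nat \<Rightarrow> (nat \<Rightarrow> int) \<Rightarrow> (int \<Rightarrow> int) set" where
  "Aset N P b l c = {b' \<in> pm1_seqs N. (\<forall>i\<in>{1..int l}. b' i = b i) \<and>
      (\<forall>i\<in>{1..P}. \<forall>j\<in>{1..P}. gram N P b' i j = Gmat N c i j)}"

text \<open>A_k(q | d_{2-P},...,d_0): number of (d_1..d_k) in {+-1}^k with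
  q_j = sum_{i=1}^k d_{i-j} d_i for 1 <= j <= P-1; the given values d_{2-P..0}
  are supplied by the function d0 (only its values on {2-P..0} matter).\<close>
definition Acount :: "nat \<Rightarrow> nat \<Rightarrow> (nat \<Rightarrow> int) \<Rightarrow> (int \<Rightarrow> int) \<Rightarrow> nat" where
  "Acount k P q d0 = card {e \<in> pm1_seqs k.
      \<forall>j\<in>{1..P - 1}. q j = (\<Sum>i = 1..int k. (if i - int j \<le> 0 then d0 (i - int j) else e (i - int j)) * e i)}"

definition mvec :: "(int \<Rightarrow> int) \<Rightarrow> nat \<Rightarrow> nat \<Rightarrow> int" where
  "mvec b l j = (if l > j then (\<Sum>i = 1..int l - int j. b i * b (i + int j)) else 0)"

end

theory Submission
  imports Defs
begin

lemma pm1_zero: "b \<in> pm1_seqs N \<Longrightarrow> (x < 1 \<or> x > int N) \<Longrightarrow> b x = 0"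
  unfolding pm1_seqs_def by auto

lemma pm1_val: "b \<in> pm1_seqs N \<Longrightarrow> 1 \<le> x \<Longrightarrow> x \<le> int N \<Longrightarrow> b x \<in> {-1,1}"
  unfolding pm1_seqs_def by auto

lemma pm1_sq: "b \<in> pm1_seqs N \<Longrightarrow> 1 \<le> x \<Longrightarrow> x \<le> int N \<Longrightarrow> b x * b x = 1"
  using pm1_val[of b N x] by auto

lemma convmat_eq: "b \<in> pm1_seqs N \<Longrightarrow> convmat N b t j = b (int t - int j + 1)"
  unfolding convmat_def Let_def using pm1_zero[of b N] by auto

lemma reindex_sum:
  fixes h :: "int \<Rightarrow> int"
  assumes h0: "\<And>w. w < 1 \<or> w > int N \<Longrightarrow> h w = 0" and i: "1 \<le> i" "i \<le> P"
  shows "(\<Sum>t = 1..N + P - 1. h (int t - int i + 1)) = (\<Sum>w\<in>{1..int N}. h w)"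
proof -
  let ?f = "\<lambda>t::nat. int t - int i + 1"
  have inj: "inj_on ?f {1..N + P - 1}" by (auto simp: inj_on_def)
  have sub: "{1..int N} \<subseteq> ?f ` {1..N + P - 1}"
  proof
    fix w assume w: "w \<in> {1..int N}"
    have "w = ?f (nat (w + int i - 1))" using w i by auto
    moreover have "nat (w + int i - 1) \<in> {1..N + P - 1}" using w i by auto
    ultimately show "w \<in> ?f ` {1..N + P - 1}" by blast
  qed
  have "(\<Sum>w\<in>{1..int N}. h w) = (\<Sum>w\<in>?f ` {1..N + P - 1}. h w)"
    by (rule sum.mono_neutral_left) (use sub h0 in auto)
  also have "\<dots> = (\<Sum>t = 1..N + P - 1. h (int t - int i + 1))"
    by (subst sum.reindex[OF inj]) simp
  finally show ?thesis by simp
qed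

lemma gram_shift:
  assumes b: "b' \<in> pm1_seqs N" and i: "i \<in> {1..P}"
  shows "gram N P b' i j = (\<Sum>w\<in>{1..int N}. b' w * b' (w - (int j - int i)))"
proof -
  have "gram N P b' i j = (\<Sum>t = 1..N + P - 1. (\<lambda>w. b' w * b' (w - (int j - int i))) (int t - int i + 1))"
    unfolding gram_def convmat_eq[OF b] by (rule sum.cong) (auto simp: algebra_simps)
  also have "\<dots> = (\<Sum>w\<in>{1..int N}. b' w * b' (w - (int j - int i)))"
    by (rule reindex_sum) (use i pm1_zero[OF b] in auto)
  finally show ?thesis .
qed

lemma agree_le:
  assumes "b' \<in> pm1_seqs N" "b \<in> pm1_seqs N" "\<forall>i\<in>{1..int l}. b' i = b i" "x \<le> int l"
  shows "b' x = b x"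
  using assms pm1_zero[of b' N x] pm1_zero[of b N x] by (cases "x < 1") auto

lemma split_sum:
  assumes b': "b' \<in> pm1_seqs N" and b: "b \<in> pm1_seqs N" and ag: "\<forall>i\<in>{1..int l}. b' i = b i"
    and lN: "l \<le> N" and s: "1 \<le> s"
  defines "e \<equiv> \<lambda>i. if 1 \<le> i \<and> i \<le> int (N - l) then b' (int l + i) else 0"
  shows "(\<Sum>w\<in>{1..int N}. b' w * b' (w - int s)) = mvec b l s +
     (\<Sum>i = 1..int (N - l). (if i - int s \<le> 0 then b (int l + (i - int s)) else e (i - int s)) * e i)"
proof -
  have un: "{1..int N} = {1..int l} \<union> {int l + 1..int N}" using lN by auto
  have "(\<Sum>w\<in>{1..int N}. b' w * b' (w - int s)) =
      (\<Sum>w\<in>{1..int l}. b' w * b' (w - int s)) + (\<Sum>w\<in>{int l + 1..int N}. b' w * b' (w - int s))"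
    unfolding un by (rule sum.union_disjoint) auto
  moreover have "(\<Sum>w\<in>{1..int l}. b' w * b' (w - int s)) = mvec b l s"
  proof -
    have "(\<Sum>w\<in>{1..int l}. b' w * b' (w - int s)) = (\<Sum>w\<in>{1..int l}. b w * b (w - int s))"
      by (rule sum.cong) (use agree_le[OF b' b ag] s in auto)
    also have "\<dots> = mvec b l s"
    proof (cases "l > s")
      case True
      have "(\<Sum>w\<in>{1..int l}. b w * b (w - int s)) = (\<Sum>w\<in>{1 + int s..int l}. b w * b (w - int s))"
        by (rule sum.mono_neutral_right) (use True pm1_zero[OF b] in auto)
      also have "\<dots> = (\<Sum>w\<in>(\<lambda>i. i + int s) ` {1..int l - int s}. b w * b (w - int s))"
        by simp
      also have "\<dots> = (\<Sum>i = 1..int l - int s. b i * b (i + int s))"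
        by (subst sum.reindex) (auto simp: inj_on_def mult.commute)
      finally show ?thesis using True unfolding mvec_def by simp
    next
      case False
      have "(\<Sum>w\<in>{1..int l}. b w * b (w - int s)) = 0"
        by (intro sum.neutral) (use False pm1_zero[OF b] in auto)
      then show ?thesis unfolding mvec_def using False by simp
    qed
    finally show ?thesis .
  qed
  moreover have "(\<Sum>w\<in>{int l + 1..int N}. b' w * b' (w - int s)) =
     (\<Sum>i = 1..int (N - l). (if i - int s \<le> 0 then b (int l + (i - int s)) else e (i - int s)) * e i)"
  proof -
    have img: "{int l + 1..int N} = (\<lambda>i. i + int l) ` {1..int (N - l)}" using lN by auto
    have "(\<Sum>w\<in>{int l + 1..int N}. b' w * b' (w - int s)) =
       (\<Sum>w\<in>(\<lambda>i. i + int l) ` {1..int (N - l)}. b' w * b' (w - int s))"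
      by (simp only: img)
    also have "\<dots> = (\<Sum>i = 1..int (N - l). b' (i + int l) * b' (i + int l - int s))"
      by (subst sum.reindex) (auto simp: inj_on_def)
    also have "\<dots> = (\<Sum>i = 1..int (N - l). (if i - int s \<le> 0 then b (int l + (i - int s)) else e (i - int s)) * e i)"
    proof (rule sum.cong)
      fix i assume i: "i \<in> {1..int (N - l)}"
      show "b' (i + int l) * b' (i + int l - int s) =
        (if i - int s \<le> 0 then b (int l + (i - int s)) else e (i - int s)) * e i"
        using i lN agree_le[OF b' b ag, of "int l + (i - int s)"] unfolding e_def
        by (auto simp: algebra_simps)
    qed simp
    finally show ?thesis .
  qed
  ultimately show ?thesis by simp
qed

theorem lemma4:
  fixes P N l :: nat and b :: "int \<Rightarrow> int" and c :: "nat \<Rightarrow> int"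
  assumes "P > 1" and "N \<ge> 1"
    and "b \<in> pm1_seqs N"
    and "\<forall>j\<in>{1..P - 1}. c j \<in> {-1, 1}"
    and "1 \<le> l" and "l \<le> N"
  shows "card (Aset N P b l c) = Acount (N - l) P (\<lambda>j. c j - mvec b l j) (\<lambda>i. b (int l + i))"
proof -
  note b = assms(3)
  let ?A = "Aset N P b l c"
  let ?q = "\<lambda>j. c j - mvec b l j"
  let ?d0 = "\<lambda>i. b (int l + i)"
  let ?E = "{e \<in> pm1_seqs (N - l). \<forall>j\<in>{1..P - 1}. ?q j = (\<Sum>i = 1..int (N - l).
      (if i - int j \<le> 0 then ?d0 (i - int j) else e (i - int j)) * e i)}"
  define \<phi> where "\<phi> = (\<lambda>b'::int\<Rightarrow>int. \<lambda>i. if 1 \<le> i \<and> i \<le> int (N - l) then b' (int l + i) else 0)"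
  define \<psi> where "\<psi> = (\<lambda>e::int\<Rightarrow>int. \<lambda>x. if x \<le> int l then b x else e (x - int l))"
  have key: "gram N P b' i j = Gmat N c i j"
    if b': "b' \<in> pm1_seqs N" and ag: "\<forall>x\<in>{1..int l}. b' x = b x"
      and E: "\<phi> b' \<in> ?E" and i: "i \<in> {1..P}" and j: "j \<in> {1..P}" for b' i j
  proof -
    have gs: "gram N P b' i j = Gmat N c i j" if ij: "i \<le> j" "i \<in> {1..P}" "j \<in> {1..P}" for i j
    proof (cases "i = j")
      case True
      then show ?thesis unfolding gram_shift[OF b' ij(2)] Gmat_def
        using pm1_sq[OF b'] by simp
    next
      case False
      define s where "s = j - i"
      have s: "1 \<le> s" "s \<le> P - 1" "int j - int i = int s" using ij False by (auto simp: s_def)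
      have "gram N P b' i j = mvec b l s + (\<Sum>k = 1..int (N - l). (if k - int s \<le> 0 then b (int l + (k - int s)) else \<phi> b' (k - int s)) * \<phi> b' k)"
        unfolding gram_shift[OF b' ij(2)] s(3) \<phi>_def
        by (rule split_sum[OF b' b ag assms(6) s(1)])
      also have "\<dots> = c s"
      proof -
        have "\<forall>j\<in>{1..P - 1}. ?q j = (\<Sum>k = 1..int (N - l).
          (if k - int j \<le> 0 then ?d0 (k - int j) else \<phi> b' (k - int j)) * \<phi> b' k)"
          using E by blast
        hence "?q s = (\<Sum>k = 1..int (N - l).
          (if k - int s \<le> 0 then ?d0 (k - int s) else \<phi> b' (k - int s)) * \<phi> b' k)"
          using s(1,2) by auto
        thus ?thesis by simp
      qed
      finally show ?thesis unfolding Gmat_def s_def using ij False by auto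
    qed
    show ?thesis
    proof (cases "i \<le> j")
      case True then show ?thesis using gs i j by auto
    next
      case False
      have "gram N P b' i j = gram N P b' j i" unfolding gram_def by (simp add: mult.commute)
      also have "\<dots> = Gmat N c j i" using gs[of j i] False i j by auto
      also have "\<dots> = Gmat N c i j" unfolding Gmat_def using False by auto
      finally show ?thesis .
    qed
  qed
  have bij: "bij_betw \<phi> ?A ?E"
  proof (rule bij_betw_byWitness[where f' = \<psi>])
    show "\<forall>a\<in>?A. \<psi> (\<phi> a) = a"
    proof
      fix a assume a: "a \<in> ?A"
      hence a1: "a \<in> pm1_seqs N" and ag: "\<forall>x\<in>{1..int l}. a x = b x" unfolding Aset_def by auto
      show "\<psi> (\<phi> a) = a"
      proof
        fix x show "\<psi> (\<phi> a) x = a x"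
          using agree_le[OF a1 b ag, of x] pm1_zero[OF a1, of x] assms(6)
          unfolding \<psi>_def \<phi>_def by auto
      qed
    qed
    show "\<forall>e\<in>?E. \<phi> (\<psi> e) = e"
    proof
      fix e assume e: "e \<in> ?E"
      hence e1: "e \<in> pm1_seqs (N - l)" by auto
      show "\<phi> (\<psi> e) = e"
      proof
        fix x show "\<phi> (\<psi> e) x = e x"
          using pm1_zero[OF e1, of x] assms(6) unfolding \<psi>_def \<phi>_def by auto
      qed
    qed
    show "\<phi> ` ?A \<subseteq> ?E"
    proof
      fix y assume "y \<in> \<phi> ` ?A"
      then obtain a where a: "a \<in> ?A" and y: "y = \<phi> a" by auto
      hence a1: "a \<in> pm1_seqs N" and ag: "\<forall>x\<in>{1..int l}. a x = b x"
        and g: "\<forall>i\<in>{1..P}. \<forall>j\<in>{1..P}. gram N P a i j = Gmat N c i j" unfolding Aset_def by auto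
      have "y \<in> pm1_seqs (N - l)" unfolding y \<phi>_def pm1_seqs_def
        using pm1_val[OF a1] assms(6) by auto
      moreover have "?q j = (\<Sum>i = 1..int (N - l).
      (if i - int j \<le> 0 then ?d0 (i - int j) else y (i - int j)) * y i)" if j: "j \<in> {1..P - 1}" for j
      proof -
        have "c j = Gmat N c 1 (1 + j)" unfolding Gmat_def using j by auto
        also have "\<dots> = gram N P a 1 (1 + j)" using g j assms(1) by auto
        also have "\<dots> = mvec b l j + (\<Sum>i = 1..int (N - l).
      (if i - int j \<le> 0 then ?d0 (i - int j) else y (i - int j)) * y i)"
        proof -
          have "gram N P a 1 (1 + j) = (\<Sum>w\<in>{1..int N}. a w * a (w - int j))"
            using gram_shift[OF a1, where i=1 and j="1+j" and P=P] assms(1) by simp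
          then show ?thesis unfolding y \<phi>_def using j
            using split_sum[OF a1 b ag assms(6), of j] by auto
        qed
        finally show ?thesis by simp
      qed
      ultimately show "y \<in> ?E" by blast
    qed
    show "\<psi> ` ?E \<subseteq> ?A"
    proof
      fix y assume "y \<in> \<psi> ` ?E"
      then obtain e where e: "e \<in> ?E" and y: "y = \<psi> e" by auto
      hence e1: "e \<in> pm1_seqs (N - l)" by auto
      have y1: "y \<in> pm1_seqs N" unfolding pm1_seqs_def y \<psi>_def
        using pm1_val[OF b] pm1_zero[OF b] pm1_val[OF e1] pm1_zero[OF e1] assms(5,6)
        by (auto simp: of_nat_diff)
      have ag: "\<forall>x\<in>{1..int l}. y x = b x" unfolding y \<psi>_def by auto
      have "\<phi> y = e"
      proof
        fix x show "\<phi> y x = e x"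
          using pm1_zero[OF e1, of x] assms(6) unfolding y \<psi>_def \<phi>_def by auto
      qed
      hence "\<phi> y \<in> ?E" using e by simp
      then show "y \<in> ?A" unfolding Aset_def using y1 ag key[OF y1 ag] by auto
    qed
  qed
  show ?thesis unfolding Acount_def using bij_betw_same_card[OF bij] by simp
qed

end
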